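(* Let $\Gamma_1=(\gamma_1,\gamma_1^\perp)$ and $\Gamma_2=(\gamma_2,\gamma_2^\perp)$ be two circles that lie on a common sphere $k\in\mathbb{P}(\mathcal{L})$ (with $\langle\mathfrak k,\mathfrak p\rangle\ne0$) and are not tangent to each other. Let $\mathfrak{s}_i\in\gamma_i^\perp\cap\mathcal L$, $i=1,2$, be spheres (not point spheres) that intersect $k$ orthogonally, and set $$\mathfrak{a}:=\langle\mathfrak{s}_2,\mathfrak{p}\rangle\mathfrak{s}_1-\langle\mathfrak{s}_1,\mathfrak{p}\rangle\mathfrak{s}_2,\qquad \tilde{\mathfrak{a}}:=\langle\sigma_{\mathfrak p}(\mathfrak{s}_2),\mathfrak{p}\rangle\mathfrak{s}_1-\langle\mathfrak{s}_1,\mathfrak{p}\rangle\sigma_{\mathfrak p}(\mathfrak{s}_2).$$ Then $\sigma_a$ and $\sigma_{\tilde a}$ are M-Lie inversions preserving $k$, each maps the points of $\Gamma_1$ bijectively onto the points of $\Gamma_2$, and they induce the two Ribaucour correspondences between $\Gamma_1$ and $\Gamma_2$: for every point $p_1$ of $\Gamma_1$ and $\sigma\in\{\sigma_a,\sigma_{\tilde a}\}$ there is a circle tangent to $\Gamma_1$ at $p_1$ and tangent to $\Gamma_2$ at $\sigma(p_1)$.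
   Context: Let $\mathbb{R}^{4,2}$ be $\mathbb{R}^6$ with a nondegenerate symmetric bilinear form $\langle\cdot,\cdot\rangle$ of signature $(4,2)$, $\mathcal{L}$ its light cone, $\mathbb{P}(\mathcal{L})$ the set of (oriented) spheres; black-letter vectors denote homogeneous coordinates. Two spheres are in oriented contact iff their coordinates are orthogonal. A point sphere complex $\mathfrak{p}$ with $\langle\mathfrak{p},\mathfrak{p}\rangle=-1$ is fixed; point spheres are elements of $\mathbb{P}(\mathcal{L}\cap\{\mathfrak p\}^\perp)$. A sphere $t$ intersects a sphere $s$ with $\langle\mathfrak s,\mathfrak p\rangle\neq0$ orthogonally iff $\langle\mathfrak{t},\mathfrak{s}+\langle\mathfrak{s},\mathfrak{p}\rangle\mathfrak{p}\rangle=0$. For $\langle\mathfrak a,\mathfrak a\rangle\neq0$ the Lie inversion with respect to $a$ is $\sigma_a(\mathfrak r)=\mathfrak r-\frac{2\langle\mathfrak r,\mathfrak a\rangle}{\langle\mathfrak a,\mathfrak a\rangle}\mathfrak a$; it is an M-Lie inversion if $\langle\mathfrak a,\mathfrak p\rangle=0$ (then it preserves $\mathfrak p$ and is a Möbius transformation). $\sigma_{\mathfrak p}$ reverses orientation of all spheres. A circle is a pair $\Gamma=(\gamma,\gamma^\perp)$ where $\gamma\subset\{\mathfrak{p}\}^\perp$ is a 3-dimensional subspace of signature $(2,1)$; its points are the point spheres in $\gamma$, the spheres containing it are those in $\gamma^\perp\cap\mathcal L$. A circle lies on a sphere $k$ iff $\mathfrak k\in\gamma^\perp$. A Ribaucour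 correspondence between two cospherical circles is a bijection between their points such that corresponding points are points of tangency of a circle tangent to both (the two circles envelop a common circle congruence). *)

theory Defs
  imports "HOL-Analysis.Analysis"
begin

type_synonym vec42 = "real ^ 6"

definition lform :: "vec42 \<Rightarrow> vec42 \<Rightarrow> real" where
  "lform x y = x$1*y$1 + x$2*y$2 + x$3*y$3 + x$4*y$4 - x$5*y$5 - x$6*y$6"

text \<open>Homogeneous coordinates of (oriented) spheres: nonzero vectors of the light cone.\<close>
definition is_sphere :: "vec42 \<Rightarrow> bool" where
  "is_sphere s \<longleftrightarrow> s \<noteq> 0 \<and> lform s s = 0"

definition lperp :: "vec42 set \<Rightarrow> vec42 set" where
  "lperp S = {x. \<forall>y\<in>S. lform x y = 0}"

text \<open>Point spheres with respect to the point sphere complex p.\<close>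
definition is_point_sphere :: "vec42 \<Rightarrow> vec42 \<Rightarrow> bool" where
  "is_point_sphere p x \<longleftrightarrow> is_sphere x \<and> lform x p = 0"

definition lie_inv :: "vec42 \<Rightarrow> vec42 \<Rightarrow> vec42" where
  "lie_inv a r = r - (2 * lform r a / lform a a) *\<^sub>R a"

definition is_M_Lie_inversion_vec :: "vec42 \<Rightarrow> vec42 \<Rightarrow> bool" where
  "is_M_Lie_inversion_vec p a \<longleftrightarrow> lform a a \<noteq> 0 \<and> lform a p = 0"

text \<open>A linear map preserves the sphere k (as element of P(L)).\<close>
definition preserves_sphere :: "(vec42 \<Rightarrow> vec42) \<Rightarrow> vec42 \<Rightarrow> bool" where
  "preserves_sphere f k \<longleftrightarrow> (\<exists>c. c \<noteq> 0 \<and> f k = c *\<^sub>R k)"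

definition sig21_subspace :: "vec42 set \<Rightarrow> bool" where
  "sig21_subspace g \<longleftrightarrow> subspace g \<and> dim g = 3 \<and>
     (\<exists>e1 e2 e3. span {e1, e2, e3} = g \<and>
        lform e1 e1 = 1 \<and> lform e2 e2 = 1 \<and> lform e3 e3 = -1 \<and>
        lform e1 e2 = 0 \<and> lform e1 e3 = 0 \<and> lform e2 e3 = 0)"

text \<open>A circle Gamma = (gamma, gamma^perp) is determined by gamma.\<close>
definition is_circle :: "vec42 \<Rightarrow> vec42 set \<Rightarrow> bool" where
  "is_circle p g \<longleftrightarrow> sig21_subspace g \<and> g \<subseteq> lperp {p}"

text \<open>Points of a circle (homogeneous coordinates of the point spheres in gamma).\<close>
definition circle_points :: "vec42 set \<Rightarrow> vec42 set" where
  "circle_points g = {x \<in> g. is_sphere x}"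

definition circle_on_sphere :: "vec42 set \<Rightarrow> vec42 \<Rightarrow> bool" where
  "circle_on_sphere g k \<longleftrightarrow> k \<in> lperp g"

text \<open>Two circles are tangent at the common point q iff they share q and the
  tangent direction at q, i.e. q^perp \<inter> gamma coincide.\<close>
definition circles_tangent_at :: "vec42 set \<Rightarrow> vec42 set \<Rightarrow> vec42 \<Rightarrow> bool" where
  "circles_tangent_at g1 g2 q \<longleftrightarrow> q \<in> circle_points g1 \<and> q \<in> circle_points g2 \<and>
      lperp {q} \<inter> g1 = lperp {q} \<inter> g2"

definition circles_tangent :: "vec42 set \<Rightarrow> vec42 set \<Rightarrow> bool" where
  "circles_tangent g1 g2 \<longleftrightarrow> (\<exists>q. circles_tangent_at g1 g2 q)"

definition intersects_orth :: "vec42 \<Rightarrow> vec42 \<Rightarrow> vec42 \<Rightarrow> bool" where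
  "intersects_orth p t s \<longleftrightarrow> lform t (s + lform s p *\<^sub>R p) = 0"

text \<open>The map f on points of gamma1 induces a Ribaucour correspondence with gamma2:
  corresponding points are points of tangency of a circle tangent to both
  (at a common point, which is fixed, the touching circle degenerates to the point).\<close>
definition induces_ribaucour :: "vec42 \<Rightarrow> (vec42 \<Rightarrow> vec42) \<Rightarrow> vec42 set \<Rightarrow> vec42 set \<Rightarrow> bool" where
  "induces_ribaucour p f g1 g2 \<longleftrightarrow>
     (\<forall>q\<in>circle_points g1.
        (q \<in> g2 \<and> f q = q) \<or>
        (\<exists>g. is_circle p g \<and> circles_tangent_at g g1 q \<and> circles_tangent_at g g2 (f q)))"

end

theory Submission
  imports Defs
begin


lemma exhaust_6:
  fixes x :: 6
  shows "x = 1 \<or> x = 2 \<or> x = 3 \<or> x = 4 \<or> x = 5 \<or> x = 6"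
proof (induct x)
  case (of_int z)
  then have "0 \<le> z" "z < 6" by simp_all
  then have "z = 0 \<or> z = 1 \<or> z = 2 \<or> z = 3 \<or> z = 4 \<or> z = 5" by presburger
  then show ?case by auto
qed

lemma UNIV_6: "(UNIV::6 set) = {1, 2, 3, 4, 5, 6}"
  using exhaust_6 by auto

lemma sum_6: "sum f (UNIV::6 set) = f 1 + f 2 + f 3 + f 4 + f 5 + f 6"
  unfolding UNIV_6 by (simp add: ac_simps)

definition J :: "vec42 \<Rightarrow> vec42" where
  "J x = (\<chi> i. if i = 5 \<or> i = 6 then - x$i else x$i)"

lemma lform_J: "lform x y = inner (J x) y"
  by (simp add: lform_def J_def inner_vec_def sum_6)

lemma J_lin: "linear J"
  by (rule linearI) (auto simp: J_def vec_eq_iff)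

lemma JJ: "J (J x) = x"
  by (auto simp: J_def vec_eq_iff)

lemma lform_sym: "lform x y = lform y x"
  by (simp add: lform_def algebra_simps)
lemma lform_add_left[simp]: "lform (x + y) z = lform x z + lform y z"
  by (simp add: lform_def algebra_simps)
lemma lform_add_right[simp]: "lform z (x + y) = lform z x + lform z y"
  by (simp add: lform_def algebra_simps)
lemma lform_diff_left[simp]: "lform (x - y) z = lform x z - lform y z"
  by (simp add: lform_def algebra_simps)
lemma lform_diff_right[simp]: "lform z (x - y) = lform z x - lform z y"
  by (simp add: lform_def algebra_simps)
lemma lform_scale_left[simp]: "lform (c *\<^sub>R x) z = c * lform x z"
  by (simp add: lform_def algebra_simps)
lemma lform_scale_right[simp]: "lform z (c *\<^sub>R x) = c * lform z x"
  by (simp add: lform_def algebra_simps)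
lemma lform_zero_left[simp]: "lform 0 z = 0"
  by (simp add: lform_def)
lemma lform_zero_right[simp]: "lform z 0 = 0"
  by (simp add: lform_def)
lemma lform_minus_left[simp]: "lform (- x) z = - lform x z"
  by (simp add: lform_def)
lemma lform_minus_right[simp]: "lform z (- x) = - lform z x"
  by (simp add: lform_def)

lemma subspace_lperp: "subspace (lperp S)"
  by (auto simp: subspace_def lperp_def)

lemma lperp_span: "lperp S = {y. \<forall>x\<in>span (J ` S). orthogonal x y}"
proof -
  have "(\<forall>x\<in>J ` S. orthogonal x y) \<longleftrightarrow> (\<forall>x\<in>span (J ` S). orthogonal x y)" for y
  proof
    assume h: "\<forall>x\<in>J ` S. orthogonal x y"
    show "\<forall>x\<in>span (J ` S). orthogonal x y"
    proof
      fix x assume "x \<in> span (J ` S)"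
      then have "orthogonal y x" using h orthogonal_to_span[of x "J ` S" y] orthogonal_commute by blast
      then show "orthogonal x y" using orthogonal_commute by blast
    qed
  next
    assume "\<forall>x\<in>span (J ` S). orthogonal x y"
    then show "\<forall>x\<in>J ` S. orthogonal x y" using span_base by blast
  qed
  moreover have "y \<in> lperp S \<longleftrightarrow> (\<forall>x\<in>J ` S. orthogonal x y)" for y
    by (auto simp: lperp_def orthogonal_def lform_J[symmetric] lform_sym[of y])
  ultimately show ?thesis by blast
qed

lemma dim_lperp: "dim (lperp S) + dim (J ` S) = 6"
proof -
  have "dim {y \<in> UNIV. \<forall>x \<in> span (J ` S). orthogonal x y} + dim (span (J ` S)) = dim (UNIV::vec42 set)"
    by (rule dim_subspace_orthogonal_to_vectors) auto
  then show ?thesis by (simp add: lperp_span)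
qed

lemma indep3:
  fixes u v w :: vec42
  assumes "\<And>c1 c2 c3. c1 *\<^sub>R u + c2 *\<^sub>R v + c3 *\<^sub>R w = 0 \<Longrightarrow> c1 = 0 \<and> c2 = 0 \<and> c3 = 0"
  shows "independent {u, v, w} \<and> card {u, v, w} = 3"
proof -
  have uv: "u \<noteq> v" using assms[of 1 "-1" 0] by auto
  have uw: "u \<noteq> w" using assms[of 1 0 "-1"] by auto
  have vw: "v \<noteq> w" using assms[of 0 1 "-1"] by auto
  have w0: "w \<notin> span {}" using assms[of 0 0 1] by auto
  have v1: "v \<notin> span {w}"
  proof
    assume "v \<in> span {w}"
    then obtain c where "v = c *\<^sub>R w" by (auto simp: span_singleton)
    then show False using assms[of 0 1 "-c"] by auto
  qed
  have u1: "u \<notin> span {v, w}"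
  proof
    assume "u \<in> span {v, w}"
    then obtain c d where "u - c *\<^sub>R v - d *\<^sub>R w = 0"
      by (auto simp: span_breakdown_eq span_singleton)
    then show False using assms[of 1 "-c" "-d"] by (auto simp: algebra_simps)
  qed
  have "independent {w}" using w0 by (simp add: independent_insert)
  then have "independent {v, w}" using v1 vw by (simp add: independent_insert)
  then have "independent {u, v, w}" using u1 uv uw by (simp add: independent_insert)
  then show ?thesis using uv uw vw by auto
qed

lemma indep2:
  fixes u v :: vec42
  assumes "\<And>c1 c2. c1 *\<^sub>R u + c2 *\<^sub>R v = 0 \<Longrightarrow> c1 = 0 \<and> c2 = 0"
  shows "independent {u, v} \<and> card {u, v} = 2"
proof -
  have uv: "u \<noteq> v" using assms[of 1 "-1"] by auto
  have w0: "v \<notin> span {}" using assms[of 0 1] by auto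
  have v1: "u \<notin> span {v}"
  proof
    assume "u \<in> span {v}"
    then obtain c where "u = c *\<^sub>R v" by (auto simp: span_singleton)
    then show False using assms[of 1 "-c"] by auto
  qed
  have "independent {v}" using w0 by (simp add: independent_insert)
  then have "independent {u, v}" using v1 uv by (simp add: independent_insert)
  then show ?thesis using uv by auto
qed

lemma span3_iff: "x \<in> span {a, b, c} \<longleftrightarrow> (\<exists>x1 x2 x3. x = x1 *\<^sub>R a + x2 *\<^sub>R b + x3 *\<^sub>R c)"
proof -
  have "x \<in> span {a, b, c} \<longleftrightarrow> (\<exists>x1 x2 x3. x - x1 *\<^sub>R a - x2 *\<^sub>R b = x3 *\<^sub>R c)"
    by (simp add: span_breakdown_eq span_singleton image_iff eq_commute)
  also have "\<dots> \<longleftrightarrow> (\<exists>x1 x2 x3. x = x1 *\<^sub>R a + x2 *\<^sub>R b + x3 *\<^sub>R c)"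
  proof -
    have "x - x1 *\<^sub>R a - x2 *\<^sub>R b = x3 *\<^sub>R c \<longleftrightarrow> x = x1 *\<^sub>R a + x2 *\<^sub>R b + x3 *\<^sub>R c" for x1 x2 x3
      by (metis add.commute diff_diff_eq diff_eq_eq)
    then show ?thesis by blast
  qed
  finally show ?thesis .
qed



lemma lperp3_mem: "x \<in> lperp {a, b, c} \<longleftrightarrow> lform x a = 0 \<and> lform x b = 0 \<and> lform x c = 0"
  by (auto simp: lperp_def)

lemma dim_lperp3:
  assumes "\<And>c1 c2 c3. c1 *\<^sub>R u + c2 *\<^sub>R v + c3 *\<^sub>R w = 0 \<Longrightarrow> c1 = 0 \<and> c2 = 0 \<and> c3 = 0"
  shows "dim (lperp {u, v, w}) = 3"
proof -
  have "J (c1 *\<^sub>R u + c2 *\<^sub>R v + c3 *\<^sub>R w) = c1 *\<^sub>R J u + c2 *\<^sub>R J v + c3 *\<^sub>R J w" for c1 c2 c3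
    using J_lin by (simp add: linear_add linear_scale)
  then have "c1 *\<^sub>R J u + c2 *\<^sub>R J v + c3 *\<^sub>R J w = 0 \<Longrightarrow> c1 = 0 \<and> c2 = 0 \<and> c3 = 0" for c1 c2 c3
    using assms[of c1 c2 c3] JJ by (metis J_lin linear_0)
  then have "independent {J u, J v, J w} \<and> card {J u, J v, J w} = 3" by (rule indep3)
  then have "dim (J ` {u, v, w}) = 3" by (simp add: dim_eq_card_independent)
  then show ?thesis using dim_lperp[of "{u,v,w}"] by simp
qed

lemma circle_char:
  assumes hp: "lform p p = -1" and hg: "is_circle p g"
    and hs: "lform s s = 0" "s \<in> lperp g" "lform s p \<noteq> 0"
    and hk: "lform k k = 0" "k \<in> lperp g" "lform k p \<noteq> 0"
    and ho: "intersects_orth p s k"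
  shows "g = lperp {s, k, p}"
proof -
  define \<alpha> where "\<alpha> = lform s p"
  define \<beta> where "\<beta> = lform k p"
  have sk: "lform s k = - \<beta> * \<alpha>"
    using ho by (simp add: intersects_orth_def \<alpha>_def \<beta>_def lform_sym[of p s])
  have ind: "c1 = 0 \<and> c2 = 0 \<and> c3 = 0" if h: "c1 *\<^sub>R s + c2 *\<^sub>R k + c3 *\<^sub>R p = 0" for c1 c2 c3
  proof -
    have e1: "lform (c1 *\<^sub>R s + c2 *\<^sub>R k + c3 *\<^sub>R p) s = 0" using h by simp
    have e2: "lform (c1 *\<^sub>R s + c2 *\<^sub>R k + c3 *\<^sub>R p) k = 0" using h by simp
    have e3: "lform (c1 *\<^sub>R s + c2 *\<^sub>R k + c3 *\<^sub>R p) p = 0" using h by simp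
    have e1': "c2 * (- \<beta> * \<alpha>) + c3 * \<alpha> = 0"
      using e1 hs(1) sk by (simp add: lform_sym[of k s] lform_sym[of p s] \<alpha>_def)
    have e2': "c1 * (- \<beta> * \<alpha>) + c3 * \<beta> = 0"
      using e2 hk(1) sk by (simp add: lform_sym[of p k] \<beta>_def)
    have e3': "c1 * \<alpha> + c2 * \<beta> - c3 = 0"
      using e3 hp by (simp add: \<alpha>_def \<beta>_def)
    have a0: "\<alpha> \<noteq> 0" "\<beta> \<noteq> 0" using hs hk by (auto simp: \<alpha>_def \<beta>_def)
    have "\<alpha> * (c3 - \<beta> * c2) = 0" using e1' by (simp add: algebra_simps)
    then have "c3 = \<beta> * c2" using a0 by simp
    moreover have "\<beta> * (c3 - \<alpha> * c1) = 0" using e2' by (simp add: algebra_simps)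
    then have "c3 = \<alpha> * c1" using a0 by simp
    ultimately have "c3 = 0" using e3' by (simp add: algebra_simps)
    then show ?thesis using \<open>c3 = \<beta> * c2\<close> \<open>c3 = \<alpha> * c1\<close> a0 by simp
  qed
  have d: "dim (lperp {s, k, p}) = 3" using ind by (rule dim_lperp3)
  have sub: "g \<subseteq> lperp {s, k, p}"
  proof
    fix x assume x: "x \<in> g"
    have "lform x s = 0" using hs(2) x lform_sym[of x s] by (auto simp: lperp_def)
    moreover have "lform x k = 0" using hk(2) x lform_sym[of x k] by (auto simp: lperp_def)
    moreover have "lform x p = 0" using hg x by (auto simp: is_circle_def lperp_def)
    ultimately show "x \<in> lperp {s, k, p}" by (simp add: lperp3_mem)
  qed
  show ?thesis
    apply (rule subspace_dim_equal[OF _ subspace_lperp sub])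
    using hg d by (auto simp: is_circle_def sig21_subspace_def)
qed

definition ortho3 :: "vec42 \<Rightarrow> vec42 \<Rightarrow> vec42 \<Rightarrow> bool" where
  "ortho3 e1 e2 e3 \<longleftrightarrow> lform e1 e1 = 1 \<and> lform e2 e2 = 1 \<and> lform e3 e3 = -1 \<and>
        lform e1 e2 = 0 \<and> lform e1 e3 = 0 \<and> lform e2 e3 = 0"

lemma ortho3_form:
  assumes "ortho3 e1 e2 e3"
  shows "lform (x1 *\<^sub>R e1 + x2 *\<^sub>R e2 + x3 *\<^sub>R e3) (y1 *\<^sub>R e1 + y2 *\<^sub>R e2 + y3 *\<^sub>R e3) = x1*y1 + x2*y2 - x3*y3"
  using assms by (auto simp: ortho3_def lform_sym[of e2 e1] lform_sym[of e3 e1] lform_sym[of e3 e2] algebra_simps)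

lemma ortho3_coeffs:
  assumes "ortho3 e1 e2 e3"
  shows "lform (x1 *\<^sub>R e1 + x2 *\<^sub>R e2 + x3 *\<^sub>R e3) e1 = x1"
    "lform (x1 *\<^sub>R e1 + x2 *\<^sub>R e2 + x3 *\<^sub>R e3) e2 = x2"
    "lform (x1 *\<^sub>R e1 + x2 *\<^sub>R e2 + x3 *\<^sub>R e3) e3 = - x3"
    "lform (x1 *\<^sub>R e1 + x2 *\<^sub>R e2 + x3 *\<^sub>R e3) (x1 *\<^sub>R e1 + x2 *\<^sub>R e2 + x3 *\<^sub>R e3) = x1^2 + x2^2 - x3^2"
  using assms by (auto simp: ortho3_def lform_sym[of e2 e1] lform_sym[of e3 e1] lform_sym[of e3 e2] power2_eq_square algebra_simps)

lemma ortho3_dim: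
  assumes "ortho3 e1 e2 e3"
  shows "dim (span {e1, e2, e3}) = 3"
proof -
  have "c1 = 0 \<and> c2 = 0 \<and> c3 = 0" if "c1 *\<^sub>R e1 + c2 *\<^sub>R e2 + c3 *\<^sub>R e3 = 0" for c1 c2 c3
  proof -
    have "lform (c1 *\<^sub>R e1 + c2 *\<^sub>R e2 + c3 *\<^sub>R e3) e1 = c1"
         "lform (c1 *\<^sub>R e1 + c2 *\<^sub>R e2 + c3 *\<^sub>R e3) e2 = c2"
         "lform (c1 *\<^sub>R e1 + c2 *\<^sub>R e2 + c3 *\<^sub>R e3) e3 = - c3"
      using ortho3_coeffs[OF assms] by blast+
    then show ?thesis unfolding that by simp
  qed
  then have "independent {e1, e2, e3} \<and> card {e1, e2, e3} = 3" by (rule indep3)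
  then show ?thesis by (simp add: dim_eq_card_independent)
qed

lemma sig21_basis:
  assumes "sig21_subspace g"
  obtains e1 e2 e3 where "ortho3 e1 e2 e3" "g = span {e1, e2, e3}"
  using assms unfolding sig21_subspace_def ortho3_def by metis

lemma tangent_exists:
  assumes o: "ortho3 e1 e2 e3" and q: "q \<in> span {e1, e2, e3}" "is_sphere q"
  shows "\<exists>t \<in> span {e1, e2, e3}. lform t q = 0 \<and> lform t t = 1"
proof -
  obtain x1 x2 x3 where qx: "q = x1 *\<^sub>R e1 + x2 *\<^sub>R e2 + x3 *\<^sub>R e3" using q(1) by (auto simp: span3_iff)
  have n: "x1^2 + x2^2 - x3^2 = 0" using q(2) ortho3_coeffs(4)[OF o] qx by (simp add: is_sphere_def)
  have x3: "x3 \<noteq> 0"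
  proof
    assume "x3 = 0"
    then have "x1 = 0" "x2 = 0" using n by (auto simp: sum_power2_eq_zero_iff)
    then show False using q(2) qx \<open>x3 = 0\<close> by (simp add: is_sphere_def)
  qed
  define t where "t = (- x2 / \<bar>x3\<bar>) *\<^sub>R e1 + (x1 / \<bar>x3\<bar>) *\<^sub>R e2 + 0 *\<^sub>R e3"
  have "t \<in> span {e1, e2, e3}" unfolding t_def span3_iff by blast
  moreover have "lform t q = 0"
    unfolding t_def qx ortho3_form[OF o] by (simp add: algebra_simps)
  moreover have "lform t t = 1"
  proof -
    have "lform t t = (x2^2 + x1^2) / x3^2" unfolding t_def ortho3_form[OF o]
      using x3 by (simp add: power2_eq_square field_simps)
    then show ?thesis using n x3 by (simp add: algebra_simps)
  qed
  ultimately show ?thesis by blast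
qed


lemma tangent_char:
  assumes o: "ortho3 e1 e2 e3" and q: "q \<in> span {e1, e2, e3}" "is_sphere q"
    and t: "t \<in> span {e1, e2, e3}" "lform t q = 0" "lform t t = 1"
  shows "lperp {q} \<inter> span {e1, e2, e3} = span {q, t}"
proof -
  let ?S = "span {e1, e2, e3}"
  let ?T = "lperp {q} \<inter> ?S"
  have subT: "subspace ?T" by (intro subspace_inter subspace_lperp subspace_span)
  have qT: "q \<in> ?T" using q by (auto simp: lperp_def is_sphere_def)
  have tT: "t \<in> ?T" using t by (auto simp: lperp_def)
  have sp: "span {q, t} \<subseteq> ?T" using qT tT subT by (intro span_minimal) auto
  have q0: "q \<noteq> 0" using q by (simp add: is_sphere_def)
  have "c1 = 0 \<and> c2 = 0" if h: "c1 *\<^sub>R q + c2 *\<^sub>R t = 0" for c1 c2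
  proof -
    have "lform (c1 *\<^sub>R q + c2 *\<^sub>R t) t = 0" using h by simp
    then have "c2 = 0" using t by (simp add: lform_sym[of q t])
    then show ?thesis using h q0 by simp
  qed
  then have "independent {q, t} \<and> card {q, t} = 2" by (rule indep2)
  then have d2: "dim (span {q, t}) = 2" by (simp add: dim_eq_card_independent)
  obtain x1 x2 x3 where qx: "q = x1 *\<^sub>R e1 + x2 *\<^sub>R e2 + x3 *\<^sub>R e3" using q(1) by (auto simp: span3_iff)
  have "\<exists>e \<in> ?S. lform e q \<noteq> 0"
  proof (rule ccontr)
    assume "\<not> ?thesis"
    then have "lform e1 q = 0" "lform e2 q = 0" "lform e3 q = 0" by (auto intro: span_base)
    then have "lform q e1 = 0" "lform q e2 = 0" "lform q e3 = 0"
      by (simp_all add: lform_sym[of _ q])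
    moreover have "lform q e1 = x1" "lform q e2 = x2" "lform q e3 = -x3"
      unfolding qx by (rule ortho3_coeffs[OF o])+
    ultimately have "x1 = 0" "x2 = 0" "x3 = 0" by simp_all
    then show False using q0 qx by simp
  qed
  then obtain e where "e \<in> ?S" "lform e q \<noteq> 0" by blast
  then have "e \<notin> ?T" by (simp add: lperp_def)
  then have "?T \<subset> ?S" using \<open>e \<in> ?S\<close> by blast
  moreover have "span ?T = ?T" using subT by (simp add: span_eq_iff)
  ultimately have "span ?T \<subset> span ?S" by (metis span_span)
  then have "dim ?T < dim ?S" by (rule dim_psubset)
  then have "dim ?T \<le> dim (span {q, t})" using ortho3_dim[OF o] d2 by simp
  then have "span {q, t} = ?T" using subspace_dim_equal[OF subspace_span subT sp] by blast
  then show ?thesis by (rule sym)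
qed



lemma lie_inv_form: "lform (lie_inv a x) y = lform x y - (2 * lform x a / lform a a) * lform a y"
  by (simp add: lie_inv_def)

lemma lie_inv_iso:
  assumes "lform a a \<noteq> 0"
  shows "lform (lie_inv a x) (lie_inv a y) = lform x y"
proof -
  have s: "lform a y = lform y a" by (rule lform_sym)
  have s2: "lform x a = lform a x" by (rule lform_sym)
  show ?thesis using assms unfolding lie_inv_def
    by (simp add: s field_simps)
qed

lemma lie_inv_fix: "lform x a = 0 \<Longrightarrow> lie_inv a x = x"
  by (simp add: lie_inv_def)

lemma lie_inv_invol:
  assumes "lform a a \<noteq> 0"
  shows "lie_inv a (lie_inv a x) = x"
proof -
  have "lform (lie_inv a x) a = - lform x a"
    using assms by (simp add: lie_inv_form)
  then show ?thesis using assms by (simp add: lie_inv_def algebra_simps)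
qed

lemma lie_inv_zero[simp]: "lie_inv a 0 = 0"
  by (simp add: lie_inv_def)

lemma lie_inv_sphere:
  assumes "lform a a \<noteq> 0" "is_sphere x"
  shows "is_sphere (lie_inv a x)"
proof -
  have "lie_inv a x \<noteq> 0"
  proof
    assume "lie_inv a x = 0"
    then have "lie_inv a (lie_inv a x) = 0" by simp
    then show False using lie_inv_invol[OF assms(1)] assms(2) by (simp add: is_sphere_def)
  qed
  then show ?thesis using assms lie_inv_iso[OF assms(1)] by (simp add: is_sphere_def)
qed

lemma lie_inv_span: "lie_inv a x \<in> span S" if "x \<in> span S" "a \<in> span S"
  unfolding lie_inv_def using that by (intro span_diff span_scale)



lemma main_one:
  fixes p k s1 s2 :: vec42 and g1 g2 :: "vec42 set"
  assumes hp: "lform p p = -1"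
    and hg1: "is_circle p g1" and hg2: "is_circle p g2"
    and hk: "is_sphere k" and hkp: "lform k p \<noteq> 0"
    and hk1: "k \<in> lperp g1" and hk2: "k \<in> lperp g2"
    and hnt: "\<not> circles_tangent g1 g2"
    and hs1: "is_sphere s1" "s1 \<in> lperp g1" "lform s1 p \<noteq> 0" "intersects_orth p s1 k"
    and hs2: "is_sphere s2" "s2 \<in> lperp g2" "lform s2 p \<noteq> 0" "intersects_orth p s2 k"
  defines "a \<equiv> lform s2 p *\<^sub>R s1 - lform s1 p *\<^sub>R s2"
  shows "is_M_Lie_inversion_vec p a \<and> preserves_sphere (lie_inv a) k \<and>
           bij_betw (lie_inv a) (circle_points g1) (circle_points g2) \<and>
           induces_ribaucour p (lie_inv a) g1 g2"
proof -
  define \<alpha>1 where "\<alpha>1 = lform s1 p"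
  define \<alpha>2 where "\<alpha>2 = lform s2 p"
  define \<beta> where "\<beta> = lform k p"
  define \<sigma> where "\<sigma> = lform s1 s2"
  have a1: "\<alpha>1 \<noteq> 0" "\<alpha>2 \<noteq> 0" "\<beta> \<noteq> 0" using hs1 hs2 hkp by (auto simp: \<alpha>1_def \<alpha>2_def \<beta>_def)
  have a_eq: "a = \<alpha>2 *\<^sub>R s1 - \<alpha>1 *\<^sub>R s2" by (simp add: a_def \<alpha>1_def \<alpha>2_def)
  have G1: "g1 = lperp {s1, k, p}"
    using hs1 hk hkp hk1 by (intro circle_char[OF hp hg1]) (auto simp: is_sphere_def)
  have G2: "g2 = lperp {s2, k, p}"
    using hs2 hk hkp hk2 by (intro circle_char[OF hp hg2]) (auto simp: is_sphere_def)
  have s1k: "lform s1 k = - \<beta> * \<alpha>1"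
    using hs1(4) by (simp add: intersects_orth_def \<alpha>1_def \<beta>_def lform_sym[of p s1])
  have s2k: "lform s2 k = - \<beta> * \<alpha>2"
    using hs2(4) by (simp add: intersects_orth_def \<alpha>2_def \<beta>_def lform_sym[of p s2])
  have s11: "lform s1 s1 = 0" "lform s2 s2 = 0" using hs1 hs2 by (auto simp: is_sphere_def)
  have s21: "lform s2 s1 = \<sigma>" by (simp add: \<sigma>_def lform_sym)
  have ap: "lform a p = 0" by (simp add: a_eq \<alpha>1_def \<alpha>2_def)
  have ak: "lform a k = 0" by (simp add: a_eq s1k s2k)
  have as1: "lform a s1 = - \<alpha>1 * \<sigma>" by (simp add: a_eq s11 s21)
  have as2: "lform a s2 = \<alpha>2 * \<sigma>" by (simp add: a_eq s11 \<sigma>_def)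
  have "lform a a = lform a (\<alpha>2 *\<^sub>R s1 - \<alpha>1 *\<^sub>R s2)" by (rule arg_cong[where f="lform a"], rule a_eq)
  then have aa: "lform a a = -2 * \<alpha>1 * \<alpha>2 * \<sigma>" by (simp add: as1 as2 algebra_simps)
  have xa: "lform x a = \<alpha>2 * lform x s1 - \<alpha>1 * lform x s2" for x
    by (simp add: a_eq)
  have pa: "lform p a = 0" using ap lform_sym[of p a] by simp
  have ka: "lform k a = 0" using ak lform_sym[of k a] by simp
  have \<sigma>0: "\<sigma> \<noteq> 0"
  proof
    assume \<sigma>z: "\<sigma> = 0"
    show False
    proof (cases "a = 0")
      case True
      have "lform x s1 = 0 \<longleftrightarrow> lform x s2 = 0" for x
        using xa[of x] True a1 by auto
      then have "g1 = g2" unfolding G1 G2 by (auto simp: lperp3_mem)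
      obtain e1 e2 e3 where o: "ortho3 e1 e2 e3" and ge: "g1 = span {e1, e2, e3}"
        using hg1 by (auto simp: is_circle_def elim: sig21_basis)
      define q where "q = e1 + e3"
      have "q \<in> g1" unfolding ge q_def by (intro span_add span_base) auto
      moreover have "lform q q = 0" using o
        by (simp add: q_def ortho3_def lform_sym[of e3 e1])
      moreover have "q \<noteq> 0"
      proof
        assume "q = 0"
        then have "e3 = - e1" by (simp add: q_def eq_neg_iff_add_eq_0 add.commute)
        then show False using o by (auto simp: ortho3_def)
      qed
      ultimately have "circles_tangent_at g1 g2 q"
        using \<open>g1 = g2\<close> by (simp add: circles_tangent_at_def circle_points_def is_sphere_def)
      then show False using hnt by (auto simp: circles_tangent_def)
    next
      case False
      have sa: "is_sphere a" using False aa \<sigma>z by (simp add: is_sphere_def)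
      have "a \<in> g1" unfolding G1 lperp3_mem using as1 ak ap \<sigma>z by simp
      moreover have "a \<in> g2" unfolding G2 lperp3_mem using as2 ak ap \<sigma>z by simp
      moreover have "lperp {a} \<inter> g1 = lperp {a} \<inter> g2"
      proof -
        have "lform x a = 0 \<Longrightarrow> lform x s1 = 0 \<longleftrightarrow> lform x s2 = 0" for x
          using xa[of x] a1 by auto
        then show ?thesis unfolding G1 G2 by (auto simp: lperp3_mem lperp_def)
      qed
      ultimately have "circles_tangent_at g1 g2 a"
        using sa by (simp add: circles_tangent_at_def circle_points_def)
      then show False using hnt by (auto simp: circles_tangent_def)
    qed
  qed
  have laa: "lform a a \<noteq> 0" using aa a1 \<sigma>0 by simp
  have M: "is_M_Lie_inversion_vec p a" using laa ap by (simp add: is_M_Lie_inversion_vec_def)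
  have fk: "lie_inv a k = k" using ka by (rule lie_inv_fix)
  have PS: "preserves_sphere (lie_inv a) k" using fk by (auto simp: preserves_sphere_def intro: exI[of _ 1])
  have map12: "lie_inv a x \<in> g2" if "x \<in> g1" for x
  proof -
    have x: "lform x s1 = 0" "lform x k = 0" "lform x p = 0" using that unfolding G1 lperp3_mem by auto
    have "lform (lie_inv a x) s2 = 0"
      unfolding lie_inv_form using xa[of x] x aa as2 a1 \<sigma>0 by (simp add: field_simps)
    moreover have "lform (lie_inv a x) k = 0" "lform (lie_inv a x) p = 0"
      unfolding lie_inv_form using x ak ap by simp_all
    ultimately show ?thesis unfolding G2 lperp3_mem by simp
  qed
  have map21: "lie_inv a x \<in> g1" if "x \<in> g2" for x
  proof -
    have x: "lform x s2 = 0" "lform x k = 0" "lform x p = 0" using that unfolding G2 lperp3_mem by auto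
    have "lform (lie_inv a x) s1 = 0"
      unfolding lie_inv_form using xa[of x] x aa as1 a1 \<sigma>0 by (simp add: field_simps)
    moreover have "lform (lie_inv a x) k = 0" "lform (lie_inv a x) p = 0"
      unfolding lie_inv_form using x ak ap by simp_all
    ultimately show ?thesis unfolding G1 lperp3_mem by simp
  qed
  have BIJ: "bij_betw (lie_inv a) (circle_points g1) (circle_points g2)"
    by (rule bij_betw_byWitness[where f'="lie_inv a"])
       (auto simp: circle_points_def lie_inv_invol[OF laa] map12 map21 lie_inv_sphere[OF laa])
  have RIB: "induces_ribaucour p (lie_inv a) g1 g2"
    unfolding induces_ribaucour_def
  proof
    fix q assume qc: "q \<in> circle_points g1"
    have qg1: "q \<in> g1" and qs: "is_sphere q" using qc by (auto simp: circle_points_def)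
    show "(q \<in> g2 \<and> lie_inv a q = q) \<or>
        (\<exists>g. is_circle p g \<and> circles_tangent_at g g1 q \<and> circles_tangent_at g g2 (lie_inv a q))"
    proof (cases "lform q a = 0")
      case True
      then have "lie_inv a q = q" by (rule lie_inv_fix)
      moreover then have "q \<in> g2" using map12[OF qg1] by simp
      ultimately show ?thesis by blast
    next
      case False
      define \<mu> where "\<mu> = lform a q"
      have \<mu>0: "\<mu> \<noteq> 0" using False lform_sym[of q a] by (simp add: \<mu>_def)
      obtain e1 e2 e3 where o: "ortho3 e1 e2 e3" and ge: "g1 = span {e1, e2, e3}"
        using hg1 by (auto simp: is_circle_def elim: sig21_basis)
      obtain t where tS: "t \<in> span {e1, e2, e3}" and tq: "lform t q = 0" and tt: "lform t t = 1"
        using tangent_exists[OF o _ qs] qg1 ge by blast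
      have tg1: "t \<in> g1" using tS ge by simp
      have qt: "lform q t = 0" using tq lform_sym[of q t] by simp
      have qq: "lform q q = 0" using qs by (simp add: is_sphere_def)
      define a' where "a' = a - lform a t *\<^sub>R t"
      define \<nu> where "\<nu> = lform a' a'"
      have a'q: "lform a' q = \<mu>" by (simp add: a'_def \<mu>_def tq)
      have qa': "lform q a' = \<mu>" using a'q lform_sym[of q a'] by simp
      have a't: "lform a' t = 0" by (simp add: a'_def tt)
      have ta': "lform t a' = 0" using a't lform_sym[of t a'] by simp
      define c1 where "c1 = (1 - \<nu>) / (2 * \<mu>)"
      define c2 where "c2 = (-1 - \<nu>) / (2 * \<mu>)"
      define u where "u = c1 *\<^sub>R q + a'"
      define w where "w = c2 *\<^sub>R q + a'"
      have uu: "lform u u = 1"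
        unfolding u_def using qq qa' a'q \<mu>0 by (simp add: \<nu>_def[symmetric] c1_def field_simps)
      have ww: "lform w w = -1"
        unfolding w_def using qq qa' a'q \<mu>0 by (simp add: \<nu>_def[symmetric] c2_def field_simps)
      have uw: "lform u w = 0"
        unfolding u_def w_def using qq qa' a'q \<mu>0 by (simp add: \<nu>_def[symmetric] c1_def c2_def field_simps)
      have tu: "lform t u = 0" unfolding u_def using tq ta' by simp
      have tw: "lform t w = 0" unfolding w_def using tq ta' by simp
      have o2: "ortho3 t u w" using tt uu ww uw tu tw by (simp add: ortho3_def)
      define D where "D = span {t, u, w}"
      have "u - w = (c1 - c2) *\<^sub>R q" by (simp add: u_def w_def scaleR_diff_left)
      moreover have "c1 - c2 = 1 / \<mu>" using \<mu>0 by (simp add: c1_def c2_def field_simps)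
      ultimately have qe: "q = \<mu> *\<^sub>R (u - w)" using \<mu>0 by simp
      have qD: "q \<in> D" unfolding D_def qe by (intro span_scale span_diff span_base) auto
      have tD: "t \<in> D" unfolding D_def by (intro span_base) auto
      have a'D: "a' \<in> D"
      proof -
        have "a' = u - c1 *\<^sub>R q" by (simp add: u_def)
        then show ?thesis using qD unfolding D_def by (metis insertI1 insert_commute span_base span_diff span_scale)
      qed
      have aD: "a \<in> D"
      proof -
        have "a = a' + lform a t *\<^sub>R t" by (simp add: a'_def)
        then show ?thesis using a'D tD unfolding D_def by (metis span_add span_scale)
      qed
      have fqD: "lie_inv a q \<in> D" using qD aD unfolding D_def by (rule lie_inv_span)
      have ftD: "lie_inv a t \<in> D" using tD aD unfolding D_def by (rule lie_inv_span)
      have tp: "lform t p = 0" using tg1 unfolding G1 lperp3_mem by simp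
      have qp: "lform q p = 0" using qg1 unfolding G1 lperp3_mem by simp
      have a'p: "lform a' p = 0" using ap tp by (simp add: a'_def)
      have Dp: "D \<subseteq> lperp {p}" unfolding D_def
        by (rule span_minimal[OF _ subspace_lperp]) (auto simp: lperp_def u_def w_def tp qp a'p)
      have circD: "is_circle p D"
        unfolding is_circle_def sig21_subspace_def
        using Dp ortho3_dim[OF o2] o2 unfolding D_def ortho3_def by (auto intro: subspace_span)
      have T1: "lperp {q} \<inter> D = span {q, t}"
        unfolding D_def by (rule tangent_char[OF o2 qD[unfolded D_def] qs tD[unfolded D_def] tq tt])
      have T2: "lperp {q} \<inter> g1 = span {q, t}"
        unfolding ge by (rule tangent_char[OF o qg1[unfolded ge] qs tS tq tt])
      have tan1: "circles_tangent_at D g1 q"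
        using qD qs qc T1 T2 by (simp add: circles_tangent_at_def circle_points_def)
      obtain f1 f2 f3 where o3: "ortho3 f1 f2 f3" and ge2: "g2 = span {f1, f2, f3}"
        using hg2 by (auto simp: is_circle_def elim: sig21_basis)
      have fqs: "is_sphere (lie_inv a q)" by (rule lie_inv_sphere[OF laa qs])
      have fqg: "lie_inv a q \<in> g2" by (rule map12[OF qg1])
      have ftg: "lie_inv a t \<in> g2" by (rule map12[OF tg1])
      have ftq: "lform (lie_inv a t) (lie_inv a q) = 0" using tq lie_inv_iso[OF laa] by simp
      have ftt: "lform (lie_inv a t) (lie_inv a t) = 1" using tt lie_inv_iso[OF laa] by simp
      have T3: "lperp {lie_inv a q} \<inter> D = span {lie_inv a q, lie_inv a t}"
        unfolding D_def by (rule tangent_char[OF o2 fqD[unfolded D_def] fqs ftD[unfolded D_def] ftq ftt])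
      have T4: "lperp {lie_inv a q} \<inter> g2 = span {lie_inv a q, lie_inv a t}"
        unfolding ge2 by (rule tangent_char[OF o3 fqg[unfolded ge2] fqs ftg[unfolded ge2] ftq ftt])
      have tan2: "circles_tangent_at D g2 (lie_inv a q)"
        using fqD fqs fqg T3 T4 by (simp add: circles_tangent_at_def circle_points_def)
      show ?thesis using circD tan1 tan2 by blast
    qed
  qed
  show ?thesis using M PS BIJ RIB by blast
qed


theorem mainTheorem6:
  fixes p k s1 s2 :: vec42 and g1 g2 :: "vec42 set"
  assumes hp: "lform p p = -1"
    and hg1: "is_circle p g1" and hg2: "is_circle p g2"
    and hk: "is_sphere k" and hkp: "lform k p \<noteq> 0"
    and hk1: "circle_on_sphere g1 k" and hk2: "circle_on_sphere g2 k"
    and hnt: "\<not> circles_tangent g1 g2"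
    and hs1: "is_sphere s1" "s1 \<in> lperp g1" "lform s1 p \<noteq> 0" "intersects_orth p s1 k"
    and hs2: "is_sphere s2" "s2 \<in> lperp g2" "lform s2 p \<noteq> 0" "intersects_orth p s2 k"
  defines "a \<equiv> lform s2 p *\<^sub>R s1 - lform s1 p *\<^sub>R s2"
    and "a2 \<equiv> lform (lie_inv p s2) p *\<^sub>R s1 - lform s1 p *\<^sub>R lie_inv p s2"
  shows "\<forall>b\<in>{a, a2}.
           is_M_Lie_inversion_vec p b \<and> preserves_sphere (lie_inv b) k \<and>
           bij_betw (lie_inv b) (circle_points g1) (circle_points g2) \<and>
           induces_ribaucour p (lie_inv b) g1 g2"
proof -
  have k1: "k \<in> lperp g1" "k \<in> lperp g2" using hk1 hk2 by (auto simp: circle_on_sphere_def)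
  define s2' where "s2' = lie_inv p s2"
  have s2'e: "s2' = s2 + (2 * lform s2 p) *\<^sub>R p" using hp by (simp add: s2'_def lie_inv_def)
  have s2'p: "lform s2' p = - lform s2 p" using hp by (simp add: s2'e)
  have "lform s2' s2' = 0"
    using hp hs2(1) by (simp add: s2'e is_sphere_def lform_sym[of p s2] algebra_simps)
  moreover have "s2' \<noteq> 0" using s2'p hs2(3) by auto
  ultimately have s2's: "is_sphere s2'" by (simp add: is_sphere_def)
  have s2'g: "s2' \<in> lperp g2"
  proof -
    have "p \<in> lperp g2" using hg2 lform_sym[of p] by (auto simp: is_circle_def lperp_def)
    then show ?thesis using hs2(2) unfolding s2'e lperp_def by auto
  qed
  have s2'o: "intersects_orth p s2' k"
    using hs2(4) hp unfolding intersects_orth_def s2'e by (simp add: lform_sym[of p k])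
  have A: "is_M_Lie_inversion_vec p a \<and> preserves_sphere (lie_inv a) k \<and>
           bij_betw (lie_inv a) (circle_points g1) (circle_points g2) \<and>
           induces_ribaucour p (lie_inv a) g1 g2"
    unfolding a_def by (rule main_one[OF hp hg1 hg2 hk hkp k1 hnt hs1 hs2])
  have A2: "is_M_Lie_inversion_vec p a2 \<and> preserves_sphere (lie_inv a2) k \<and>
           bij_betw (lie_inv a2) (circle_points g1) (circle_points g2) \<and>
           induces_ribaucour p (lie_inv a2) g1 g2"
    unfolding a2_def s2'_def[symmetric]
    by (rule main_one[OF hp hg1 hg2 hk hkp k1 hnt hs1 s2's s2'g _ s2'o]) (simp add: s2'p hs2(3))
  show ?thesis using A A2 by blast
qed

end
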